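(* Let $\Omega\subseteq\mathbb{R}^n$ be open and convex, let $f:\Omega\to\mathbb{R}$ be convex and differentiable with $\nabla f$ Lipschitz continuous with constant $L$ (extend $f$ by $+\infty$ outside $\Omega$), let $g:\mathbb{R}^n\to\mathbb{R}\cup\{+\infty\}$ be convex with closed sublevel sets, and let $h=f+g$ have compact sublevel sets and $h^\star=\inf_x h(x)<\infty$. Run the oracle-structured minimization method (described in the context) from $x^0\in\Omega$, producing iterates $x^k$ and tentative steps $v^k=x^{k+1/2}-x^k$. Then $h(x^{k+1})\le h(x^k)$ for all $k$ and $v^k\to 0$ as $k\to\infty$.
   Context: Oracle-structured minimization method (OSMM). Fixed parameters: memory $M\ge1$ (integer), $\alpha,\beta\in(0,1)$, $\tau_{\min}>0$, $0<\mu_{\min}\le\mu_{\max}$, $\gamma_{\rm dec}\in(0,1)$, $\gamma_{\rm inc}>1$, and an initial $\mu_0\in[\mu_{\min},\mu_{\max}]$. There is a constant $C$ and, for each $k$, a symmetric positive semidefinite matrix $H_k$ with $\|H_k\|_2\le C$ (otherwise arbitrary, e.g. a quasi-Newton curvature estimate). For $k=0,1,2,\dots$: (1) $l_k(x)=\max_{i=\max\{0,k-M+1\},\dots,k}\big(f(x^i)+\nabla f(x^i)^T(x-x^i)\big)$; $\tau_k=\operatorname{Tr}(H_k)/n$; $\lambda_k=\mu_k(\tau_k+\tau_{\min})$. (2) $x^{k+1/2}=\operatorname*{argmin}_x\big(l_k(x)+g(x)+\tfrac12(x-x^k)^T(H_k+\lambda_kI)(x-x^k)\big)$, $v^k=x^{k+1/2}-x^k$.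 (3) With $\phi_k(t)=f(x^k+tv^k)+t\,g(x^{k+1/2})+(1-t)g(x^k)$ for $t\in[0,1]$, let $t_k=\beta^j$ where $j$ is the smallest nonnegative integer with $\phi_k(t_k)\le h(x^k)-\frac{\alpha t_k}{2}(v^k)^T(H_k+\lambda_kI)v^k$; set $x^{k+1}=x^k+t_kv^k$. (4) $\mu_{k+1}=\max\{\gamma_{\rm dec}\mu_k,\mu_{\min}\}$ if $t_k=1$, and $\mu_{k+1}=\min\{\gamma_{\rm inc}\mu_k,\mu_{\max}\}$ if $t_k<1$. *)

theory Defs
  imports "HOL-Analysis.Analysis" "HOL-Library.Extended_Real"
begin

definition ext_f :: "(real^'n) set \<Rightarrow> (real^'n \<Rightarrow> real) \<Rightarrow> real^'n \<Rightarrow> ereal" where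
  "ext_f \<Omega> f x = (if x \<in> \<Omega> then ereal (f x) else \<infinity>)"

definition ereal_convex :: "(real^'n \<Rightarrow> ereal) \<Rightarrow> bool" where
  "ereal_convex g \<longleftrightarrow> convex {(x, r::real). g x \<le> ereal r}"

text \<open>Piecewise-linear model l_k built from the last M iterates
  (indices max 0 (k-M+1), ..., k; note Suc k - M truncates at 0).\<close>
definition lin_model ::
  "(real^'n \<Rightarrow> real) \<Rightarrow> (real^'n \<Rightarrow> real^'n) \<Rightarrow> (nat \<Rightarrow> real^'n) \<Rightarrow> nat \<Rightarrow> nat \<Rightarrow> real^'n \<Rightarrow> real" where
  "lin_model f fgrad x M k y = Max ((\<lambda>i. f (x i) + fgrad (x i) \<bullet> (y - x i)) ` {Suc k - M..k})"

definition osmm_lambda :: "real \<Rightarrow> real \<Rightarrow> real^'n^'n \<Rightarrow> real" where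
  "osmm_lambda \<tau>min \<mu>k Hk = \<mu>k * (trace Hk / real CARD('n) + \<tau>min)"

definition osmm_quad :: "real^'n^'n \<Rightarrow> real \<Rightarrow> real^'n \<Rightarrow> real" where
  "osmm_quad Hk lamk d = (1/2) * (d \<bullet> ((Hk + lamk *\<^sub>R mat 1) *v d))"

text \<open>The OSMM iteration: x k = x^k, xh k = x^{k+1/2}, mu k = mu_k, t k = t_k,
  for the given sequence of curvature matrices H.\<close>
definition osmm_run ::
  "(real^'n) set \<Rightarrow> (real^'n \<Rightarrow> real) \<Rightarrow> (real^'n \<Rightarrow> real^'n) \<Rightarrow> (real^'n \<Rightarrow> ereal) \<Rightarrow>
   nat \<Rightarrow> real \<Rightarrow> real \<Rightarrow> real \<Rightarrow> real \<Rightarrow> real \<Rightarrow> real \<Rightarrow> real \<Rightarrow>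
   (nat \<Rightarrow> real^'n^'n) \<Rightarrow> (nat \<Rightarrow> real^'n) \<Rightarrow> (nat \<Rightarrow> real^'n) \<Rightarrow> (nat \<Rightarrow> real) \<Rightarrow> (nat \<Rightarrow> real) \<Rightarrow> bool"
where
  "osmm_run \<Omega> f fgrad g M \<alpha> \<beta> \<tau>min \<mu>min \<mu>max \<gamma>dec \<gamma>inc H x xh \<mu> t \<longleftrightarrow>
     (\<forall>k. let lamk = osmm_lambda \<tau>min (\<mu> k) (H k);
              v = xh k - x k;
              h = (\<lambda>y. ext_f \<Omega> f y + g y);
              \<phi> = (\<lambda>s. ext_f \<Omega> f (x k + s *\<^sub>R v) + ereal s * g (xh k) + ereal (1 - s) * g (x k));
              ok = (\<lambda>j::nat. \<phi> (\<beta> ^ j) \<le> h (x k) - ereal (\<alpha> * \<beta> ^ j * osmm_quad (H k) lamk v))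
          in
            \<comment> \<open>step (2): x^{k+1/2} is the minimizer of the subproblem\<close>
            (\<forall>y. ereal (lin_model f fgrad x M k (xh k)) + g (xh k) + ereal (osmm_quad (H k) lamk (xh k - x k))
                 \<le> ereal (lin_model f fgrad x M k y) + g y + ereal (osmm_quad (H k) lamk (y - x k)))
            \<comment> \<open>step (3): backtracking line search, smallest j\<close>
          \<and> (\<exists>j. t k = \<beta> ^ j \<and> ok j \<and> (\<forall>i<j. \<not> ok i))
          \<and> x (Suc k) = x k + t k *\<^sub>R v
            \<comment> \<open>step (4): update of mu\<close>
          \<and> \<mu> (Suc k) = (if t k = 1 then max (\<gamma>dec * \<mu> k) \<mu>min else min (\<gamma>inc * \<mu> k) \<mu>max))"

end

theory Submission
  imports Defs
begin

lemma deriv_line: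
  fixes f :: "real^'n \<Rightarrow> real" and fgrad :: "real^'n \<Rightarrow> real^'n"
  assumes f_grad: "\<And>y. y \<in> \<Omega> \<Longrightarrow> (f has_derivative (\<lambda>d. fgrad y \<bullet> d)) (at y)"
    and "y + r *\<^sub>R d \<in> \<Omega>"
  shows "((\<lambda>s. f (y + s *\<^sub>R d)) has_real_derivative (fgrad (y + r *\<^sub>R d) \<bullet> d)) (at r within S)"
proof -
  have l: "((\<lambda>s. y + s *\<^sub>R d) has_derivative (\<lambda>u. u *\<^sub>R d)) (at r within S)"
    by (auto intro!: derivative_eq_intros)
  have "((\<lambda>s. f (y + s *\<^sub>R d)) has_derivative (\<lambda>u. fgrad (y + r *\<^sub>R d) \<bullet> (u *\<^sub>R d))) (at r within S)"
    using has_derivative_compose[OF l f_grad[OF assms(2)]] by (simp add: o_def)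
  moreover have "(\<lambda>u. fgrad (y + r *\<^sub>R d) \<bullet> (u *\<^sub>R d)) = (*) (fgrad (y + r *\<^sub>R d) \<bullet> d)"
    by (auto simp: fun_eq_iff)
  ultimately show ?thesis
    by (simp add: has_field_derivative_def)
qed

lemma grad_ineq:
  fixes f :: "real^'n \<Rightarrow> real" and fgrad :: "real^'n \<Rightarrow> real^'n"
  assumes "open \<Omega>" "convex \<Omega>" "convex_on \<Omega> f"
    and f_grad: "\<And>y. y \<in> \<Omega> \<Longrightarrow> (f has_derivative (\<lambda>d. fgrad y \<bullet> d)) (at y)"
    and y: "y \<in> \<Omega>" and z: "z \<in> \<Omega>"
  shows "f y + fgrad y \<bullet> (z - y) \<le> f z"
proof -
  define d where "d = z - y"
  define A where "A = {r::real. y + r *\<^sub>R d \<in> \<Omega>}"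
  have Aeq: "A = (\<lambda>r. y + r *\<^sub>R d) -` \<Omega>" unfolding A_def by auto
  have oA: "open A" unfolding Aeq
    by (rule open_vimage[OF assms(1)]) (auto intro!: continuous_intros)
  have eqc: "y + ((1 - u) * a + u * b) *\<^sub>R d = (1 - u) *\<^sub>R (y + a *\<^sub>R d) + u *\<^sub>R (y + b *\<^sub>R d)" for u a b
    by (simp add: algebra_simps)
  have cA: "convex A" unfolding convex_alt A_def
    using eqc assms(2)[unfolded convex_alt] by auto
  have cvx: "convex_on A (\<lambda>r. f (y + r *\<^sub>R d))"
  proof (rule convex_onI[OF _ cA])
    fix u a b :: real assume "u > 0" "u < 1" "a \<in> A" "b \<in> A"
    then show "f (y + ((1 - u) *\<^sub>R a + u *\<^sub>R b) *\<^sub>R d) \<le> (1 - u) * f (y + a *\<^sub>R d) + u * f (y + b *\<^sub>R d)"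
      using convex_onD[OF assms(3), of u "y + a *\<^sub>R d" "y + b *\<^sub>R d"] eqc[of u a b]
      by (simp add: A_def)
  qed
  have "0 \<in> A" "1 \<in> A" using y z by (auto simp: A_def d_def)
  have "(fgrad y \<bullet> d) * (1 - 0) \<le> f (y + 1 *\<^sub>R d) - f (y + 0 *\<^sub>R d)"
    apply (rule convex_on_imp_above_tangent[OF cvx convex_connected[OF cA]])
    using \<open>0 \<in> A\<close> \<open>1 \<in> A\<close> oA interior_open apply auto[2]
    using deriv_line[OF f_grad, where y=y and r=0 and d=d] y by simp
  then show ?thesis by (simp add: d_def)
qed

lemma descent:
  fixes f :: "real^'n \<Rightarrow> real" and fgrad :: "real^'n \<Rightarrow> real^'n"
  assumes f_grad: "\<And>y. y \<in> \<Omega> \<Longrightarrow> (f has_derivative (\<lambda>d. fgrad y \<bullet> d)) (at y)"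
    and lip: "L-lipschitz_on \<Omega> fgrad"
    and s: "s \<ge> 0" and seg: "\<And>r. 0 \<le> r \<Longrightarrow> r \<le> s \<Longrightarrow> y + r *\<^sub>R d \<in> \<Omega>"
  shows "f (y + s *\<^sub>R d) \<le> f y + s * (fgrad y \<bullet> d) + L * s^2 * (norm d)^2"
proof -
  have der: "((\<lambda>r. f (y + r *\<^sub>R d)) has_derivative (\<lambda>u. (fgrad (y + r *\<^sub>R d) \<bullet> d) * u)) (at r within {0..s})"
    if "0 \<le> r" "r \<le> s" for r
    using deriv_line[OF f_grad seg[OF that]] unfolding has_field_derivative_def .
  obtain \<xi> where \<xi>: "\<xi> \<in> {0..s}" and eq: "f (y + s *\<^sub>R d) - f (y + 0 *\<^sub>R d) = (fgrad (y + \<xi> *\<^sub>R d) \<bullet> d) * (s - 0)"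
    using mvt_very_simple[OF s der] by blast
  have "y \<in> \<Omega>" using seg[of 0] s by simp
  have L0: "L \<ge> 0" using lip by (simp add: lipschitz_on_def)
  have "fgrad (y + \<xi> *\<^sub>R d) \<bullet> d - fgrad y \<bullet> d = (fgrad (y + \<xi> *\<^sub>R d) - fgrad y) \<bullet> d"
    by (simp add: inner_diff_left)
  also have "\<dots> \<le> norm (fgrad (y + \<xi> *\<^sub>R d) - fgrad y) * norm d"
    by (rule norm_cauchy_schwarz)
  also have "norm (fgrad (y + \<xi> *\<^sub>R d) - fgrad y) \<le> L * norm (\<xi> *\<^sub>R d)"
    using lipschitz_onD[OF lip seg[of \<xi>] \<open>y \<in> \<Omega>\<close>] \<xi> by (simp add: dist_norm)
  hence "norm (fgrad (y + \<xi> *\<^sub>R d) - fgrad y) * norm d \<le> (L * norm (\<xi> *\<^sub>R d)) * norm d"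
    by (rule mult_right_mono) simp
  also have "(L * norm (\<xi> *\<^sub>R d)) * norm d = L * \<xi> * norm d * norm d" using \<xi> by simp
  also have "\<dots> \<le> L * s * norm d * norm d"
    using \<xi> L0 by (intro mult_right_mono mult_left_mono) auto
  finally have "s * (fgrad (y + \<xi> *\<^sub>R d) \<bullet> d - fgrad y \<bullet> d) \<le> s * (L * s * norm d * norm d)"
    using s by (intro mult_left_mono)
  then show ?thesis using eq by (simp add: algebra_simps power2_eq_square)
qed

lemma g_cvx:
  fixes g :: "real^'n \<Rightarrow> ereal"
  assumes "ereal_convex g" "g a = ereal A" "g b = ereal B" "0 \<le> t" "t \<le> 1"
  shows "g (a + t *\<^sub>R (b - a)) \<le> ereal (t * B + (1 - t) * A)"
proof -
  let ?E = "{(x, r::real). g x \<le> ereal r}"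
  have "(a, A) \<in> ?E" "(b, B) \<in> ?E" using assms by auto
  hence "(1 - t) *\<^sub>R (a, A) + t *\<^sub>R (b, B) \<in> ?E"
    using assms(1) unfolding ereal_convex_def
    by (intro convexD) (use assms in auto)
  moreover have "a + t *\<^sub>R (b - a) = (1 - t) *\<^sub>R a + t *\<^sub>R b" by (simp add: algebra_simps)
  ultimately show ?thesis by (simp add: algebra_simps)
qed

lemma trace_psd:
  fixes A :: "real^'n^'n"
  assumes "\<And>d. d \<bullet> (A *v d) \<ge> 0"
  shows "trace A \<ge> 0"
proof -
  have "A $ i $ i = axis i 1 \<bullet> (A *v axis i 1)" for i
    by (simp add: matrix_vector_mult_basis inner_axis' column_def)
  then show ?thesis unfolding trace_def using assms by (simp add: sum_nonneg)
qed

lemma scal_mat1: "((c::real) *\<^sub>R mat 1) *v (d::real^'n) = c *\<^sub>R d"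
  by (simp add: vec_eq_iff matrix_vector_mult_def mat_def if_distrib if_distribR cong: if_cong)

lemma quad_ge:
  fixes Hk :: "real^'n^'n"
  assumes "\<And>d. d \<bullet> (Hk *v d) \<ge> 0"
  shows "osmm_quad Hk lam d \<ge> lam / 2 * (norm d)^2"
proof -
  have "d \<bullet> ((Hk + lam *\<^sub>R mat 1) *v d) = d \<bullet> (Hk *v d) + lam * (norm d)^2"
    by (simp add: matrix_vector_mult_add_rdistrib inner_add_right power2_norm_eq_inner
        scal_mat1)
  then show ?thesis using assms[of d] unfolding osmm_quad_def by simp
qed


theorem mainTheorem2:
  fixes \<Omega> :: "(real^'n) set" and f :: "real^'n \<Rightarrow> real" and fgrad :: "real^'n \<Rightarrow> real^'n"
    and g :: "real^'n \<Rightarrow> ereal" and L :: real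
    and M :: nat and \<alpha> \<beta> \<tau>min \<mu>min \<mu>max \<gamma>dec \<gamma>inc C :: real
    and H :: "nat \<Rightarrow> real^'n^'n" and x xh :: "nat \<Rightarrow> real^'n" and \<mu> t :: "nat \<Rightarrow> real"
  assumes \<Omega>: "open \<Omega>" "convex \<Omega>"
    and f_convex: "convex_on \<Omega> f"
    and f_grad: "\<And>y. y \<in> \<Omega> \<Longrightarrow> (f has_derivative (\<lambda>d. fgrad y \<bullet> d)) (at y)"
    and f_lip: "L-lipschitz_on \<Omega> fgrad"
    and g_not_minf: "\<And>y. g y \<noteq> -\<infinity>"
    and g_convex: "ereal_convex g"
    and g_closed: "\<And>c::real. closed {y. g y \<le> ereal c}"
    and h_compact: "\<And>c::real. compact {y. ext_f \<Omega> f y + g y \<le> ereal c}"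
    and h_inf: "(INF y. ext_f \<Omega> f y + g y) < \<infinity>"
    and params: "M \<ge> 1" "0 < \<alpha>" "\<alpha> < 1" "0 < \<beta>" "\<beta> < 1" "\<tau>min > 0"
      "0 < \<mu>min" "\<mu>min \<le> \<mu>max" "0 < \<gamma>dec" "\<gamma>dec < 1" "\<gamma>inc > 1"
    and mu0: "\<mu>min \<le> \<mu> 0" "\<mu> 0 \<le> \<mu>max"
    and H_sym: "\<And>k. transpose (H k) = H k"
    and H_psd: "\<And>k d. d \<bullet> (H k *v d) \<ge> 0"
    and H_bnd: "\<And>k. onorm (\<lambda>d. H k *v d) \<le> C"
    and x0: "x 0 \<in> \<Omega>" "g (x 0) < \<infinity>"
    and run: "osmm_run \<Omega> f fgrad g M \<alpha> \<beta> \<tau>min \<mu>min \<mu>max \<gamma>dec \<gamma>inc H x xh \<mu> t"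
  shows "(\<forall>k. ext_f \<Omega> f (x (Suc k)) + g (x (Suc k)) \<le> ext_f \<Omega> f (x k) + g (x k))
         \<and> (\<lambda>k. xh k - x k) \<longlonglongrightarrow> 0"
proof -
  define lam where "lam k = osmm_lambda \<tau>min (\<mu> k) (H k)" for k
  define v where "v k = xh k - x k" for k
  define q where "q k = osmm_quad (H k) (lam k) (v k)" for k
  define hh where "hh y = ext_f \<Omega> f y + g y" for y
  define l where "l k y = lin_model f fgrad x M k y" for k y
  define okk where "okk k j \<longleftrightarrow> ext_f \<Omega> f (x k + \<beta> ^ j *\<^sub>R v k) + ereal (\<beta> ^ j) * g (xh k)
      + ereal (1 - \<beta> ^ j) * g (x k) \<le> hh (x k) - ereal (\<alpha> * \<beta> ^ j * q k)" for k j
  define G where "G y = real_of_ereal (g y)" for y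
  define F where "F k = f (x k) + G (x k)" for k
  define c where "c = \<mu>min * \<tau>min"
  have c_pos: "c > 0" using params unfolding c_def by simp
  have step: "(\<forall>y. ereal (l k (xh k)) + g (xh k) + ereal (q k)
        \<le> ereal (l k y) + g y + ereal (osmm_quad (H k) (lam k) (y - x k)))
     \<and> (\<exists>j. t k = \<beta> ^ j \<and> okk k j \<and> (\<forall>i<j. \<not> okk k i))
     \<and> x (Suc k) = x k + t k *\<^sub>R v k
     \<and> \<mu> (Suc k) = (if t k = 1 then max (\<gamma>dec * \<mu> k) \<mu>min else min (\<gamma>inc * \<mu> k) \<mu>max)" for k
    using run unfolding osmm_run_def Let_def lam_def v_def q_def hh_def okk_def l_def by blast
  have mu_ge: "\<mu>min \<le> \<mu> k" for k
  proof (induction k)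
    case 0 then show ?case using mu0 by simp
  next
    case (Suc k)
    have "1 * \<mu> k \<le> \<gamma>inc * \<mu> k" using Suc.IH params by (intro mult_right_mono) auto
    hence h2: "\<mu>min \<le> \<gamma>inc * \<mu> k" using Suc.IH by linarith
    have "\<mu> (Suc k) = (if t k = 1 then max (\<gamma>dec * \<mu> k) \<mu>min else min (\<gamma>inc * \<mu> k) \<mu>max)"
      using step[of k] by blast
    then show ?case using h2 params by (simp split: if_splits)
  qed
  have lam_ge: "lam k \<ge> c" for k
  proof -
    have "trace (H k) / real CARD('n) \<ge> 0" using trace_psd[OF H_psd] by simp
    hence "\<mu> k * (trace (H k) / real CARD('n) + \<tau>min) \<ge> \<mu>min * \<tau>min"
      using mu_ge[of k] params by (intro mult_mono) auto
    then show ?thesis unfolding lam_def osmm_lambda_def c_def .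
  qed
  have q_ge: "q k \<ge> c / 2 * (norm (v k))^2" for k
  proof -
    have "q k \<ge> lam k / 2 * (norm (v k))^2" unfolding q_def by (rule quad_ge[OF H_psd])
    moreover have "lam k / 2 * (norm (v k))^2 \<ge> c / 2 * (norm (v k))^2"
      using lam_ge[of k] by (intro mult_right_mono) auto
    ultimately show ?thesis by linarith
  qed
  have q0: "osmm_quad (H k) (lam k) 0 = 0" for k by (simp add: osmm_quad_def)
  have ext_in: "y \<in> \<Omega> \<Longrightarrow> ext_f \<Omega> f y = ereal (f y)" for y by (simp add: ext_f_def)
  have ext_out: "y \<notin> \<Omega> \<Longrightarrow> ext_f \<Omega> f y = \<infinity>" for y by (simp add: ext_f_def)
  have gG: "g y \<noteq> \<infinity> \<Longrightarrow> g y = ereal (G y)" for y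
    using g_not_minf[of y] unfolding G_def by (cases "g y") auto
  have key: "g (xh k) \<noteq> \<infinity> \<and> fgrad (x k) \<bullet> v k + G (xh k) - G (x k) \<le> - q k
      \<and> 0 < t k \<and> t k \<le> 1 \<and> x (Suc k) \<in> \<Omega> \<and> g (x (Suc k)) \<noteq> \<infinity>
      \<and> F (Suc k) \<le> F k - \<alpha> * t k * q k"
    if inv: "\<forall>i\<le>k. x i \<in> \<Omega> \<and> g (x i) \<noteq> \<infinity>" for k
  proof -
    have xk: "x k \<in> \<Omega>" "g (x k) = ereal (G (x k))" using inv gG by auto
    have fin: "finite {Suc k - M..k}" "{Suc k - M..k} \<noteq> {}" using params(1) by auto
    have lx: "l k (x k) \<le> f (x k)"
      unfolding l_def lin_model_def using fin
      by (auto intro!: grad_ineq[OF \<Omega> f_convex f_grad] simp: inv xk)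
    have lxh: "l k (xh k) \<ge> f (x k) + fgrad (x k) \<bullet> v k"
      unfolding l_def lin_model_def v_def using fin by (intro Max_ge) auto
    have opt: "ereal (l k (xh k)) + g (xh k) + ereal (q k) \<le> ereal (l k (x k)) + ereal (G (x k))"
    proof -
      have "ereal (l k (xh k)) + g (xh k) + ereal (q k)
        \<le> ereal (l k (x k)) + g (x k) + ereal (osmm_quad (H k) (lam k) (x k - x k))"
        using step[of k] by blast
      then show ?thesis using q0[of k] xk by simp
    qed
    have gxh: "g (xh k) \<noteq> \<infinity>"
    proof
      assume "g (xh k) = \<infinity>" then show False using opt by simp
    qed
    hence gxh': "g (xh k) = ereal (G (xh k))" by (rule gG)
    have "l k (xh k) + G (xh k) + q k \<le> l k (x k) + G (x k)" using opt gxh' by simp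
    hence dec: "fgrad (x k) \<bullet> v k + G (xh k) - G (x k) \<le> - q k" using lx lxh by linarith
    obtain j where tj: "t k = \<beta> ^ j" and okj: "okk k j" using step[of k] by blast
    have t01: "0 < t k" "t k \<le> 1" using tj params by (auto simp: power_le_one)
    have okj': "ext_f \<Omega> f (x k + t k *\<^sub>R v k) + ereal (t k * G (xh k) + (1 - t k) * G (x k))
        \<le> ereal (F k - \<alpha> * t k * q k)"
      using okj unfolding okk_def tj[symmetric] hh_def F_def using xk gxh' ext_in[OF xk(1)]
      by (simp add: add.assoc)
    have xs: "x k + t k *\<^sub>R v k \<in> \<Omega>"
    proof (rule ccontr)
      assume "x k + t k *\<^sub>R v k \<notin> \<Omega>"
      then show False using okj' ext_out by simp
    qed
    have r1: "f (x k + t k *\<^sub>R v k) + (t k * G (xh k) + (1 - t k) * G (x k)) \<le> F k - \<alpha> * t k * q k"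
      using okj' ext_in[OF xs] by simp
    have gc: "g (x k + t k *\<^sub>R v k) \<le> ereal (t k * G (xh k) + (1 - t k) * G (x k))"
      unfolding v_def using g_cvx[OF g_convex xk(2) gxh'] t01 by simp
    have xS: "x (Suc k) = x k + t k *\<^sub>R v k" using step[of k] by blast
    have gS: "g (x (Suc k)) \<noteq> \<infinity>" using gc xS by auto
    have "G (x (Suc k)) \<le> t k * G (xh k) + (1 - t k) * G (x k)"
      using gc gG[OF gS] xS by simp
    hence "F (Suc k) \<le> F k - \<alpha> * t k * q k" using r1 xS unfolding F_def by simp
    then show ?thesis using gxh dec t01 xs xS gS by simp
  qed
  have inv: "\<forall>i\<le>k. x i \<in> \<Omega> \<and> g (x i) \<noteq> \<infinity>" for k
  proof (induction k)
    case 0 then show ?case using x0 by simp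
  next
    case (Suc k) then show ?case using key[OF Suc] by (auto simp: le_Suc_eq)
  qed
  have keyk: "g (xh k) \<noteq> \<infinity> \<and> fgrad (x k) \<bullet> v k + G (xh k) - G (x k) \<le> - q k
      \<and> 0 < t k \<and> t k \<le> 1 \<and> x (Suc k) \<in> \<Omega> \<and> g (x (Suc k)) \<noteq> \<infinity>
      \<and> F (Suc k) \<le> F k - \<alpha> * t k * q k" for k using key[OF inv] .
  have hhF: "hh (x k) = ereal (F k)" for k
  proof -
    have "x k \<in> \<Omega>" "g (x k) = ereal (G (x k))" using inv[of k] gG by auto
    then show ?thesis using ext_in unfolding hh_def F_def by simp
  qed
  have q_nn: "q k \<ge> 0" for k
  proof -
    have "0 \<le> c / 2 * (norm (v k))^2" using c_pos by simp
    then show ?thesis using q_ge[of k] by linarith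
  qed
  have Fdec: "F (Suc k) \<le> F k" for k
  proof -
    have "0 \<le> \<alpha> * t k * q k" using keyk[of k] q_nn[of k] params by simp
    then show ?thesis using keyk[of k] by linarith
  qed
  have part1: "\<forall>k. ext_f \<Omega> f (x (Suc k)) + g (x (Suc k)) \<le> ext_f \<Omega> f (x k) + g (x k)"
    using hhF Fdec unfolding hh_def by simp
  have Fdecseq: "decseq F" by (rule decseq_SucI) (rule Fdec)
  define K where "K = {y. hh y \<le> ereal (F 0)}"
  have Kc: "compact K" unfolding K_def hh_def by (rule h_compact)
  have xK: "x k \<in> K" for k
    using Fdecseq hhF unfolding K_def by (simp add: decseq_def)
  have hh_out: "y \<notin> \<Omega> \<Longrightarrow> hh y = \<infinity>" for y
    using g_not_minf[of y] unfolding hh_def ext_f_def by simp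
  have KO: "K \<subseteq> \<Omega>"
  proof
    fix y assume "y \<in> K"
    then show "y \<in> \<Omega>" using hh_out[of y] unfolding K_def by (metis mem_Collect_eq ereal_less_eq(1) ereal_infty_less_eq(1) PInfty_neq_ereal(1))
  qed
  have hh_nm: "hh y \<noteq> -\<infinity>" for y
    using g_not_minf[of y] unfolding hh_def ext_f_def by (cases "g y") auto
  have Fbnd: "\<exists>B. \<forall>k. B \<le> F k"
  proof (rule ccontr)
    assume nb: "\<not> (\<exists>B. \<forall>k. B \<le> F k)"
    obtain xs r where "xs \<in> K" and r: "strict_mono r" and lim: "(x \<circ> r) \<longlonglongrightarrow> xs"
      using compact_imp_seq_compact[OF Kc] xK by (metis seq_compactE)
    have "hh xs \<le> ereal B" for B
    proof -
      obtain N where N: "F N < B" using nb by (meson not_le)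
      have ev: "eventually (\<lambda>n. (x \<circ> r) n \<in> {y. hh y \<le> ereal B}) sequentially"
      proof (rule eventually_sequentiallyI[of N])
        fix n assume "N \<le> n"
        hence "N \<le> r n" using seq_suble[OF r, of n] by linarith
        hence "F (r n) \<le> F N" using Fdecseq by (simp add: decseq_def)
        thus "(x \<circ> r) n \<in> {y. hh y \<le> ereal B}" using hhF[of "r n"] N by simp
      qed
      have eqs: "{y. hh y \<le> ereal B} = {y. ext_f \<Omega> f y + g y \<le> ereal B}" by (simp add: hh_def)
      have "closed {y. hh y \<le> ereal B}" unfolding eqs by (rule compact_imp_closed[OF h_compact])
      then have "xs \<in> {y. hh y \<le> ereal B}"
        by (rule Lim_in_closed_set[OF _ ev _ lim]) simp
      thus ?thesis by simp
    qed
    hence "hh xs = -\<infinity>" by (rule ereal_bot)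
    thus False using hh_nm by simp
  qed
  then obtain B where B: "\<forall>k. B \<le> F k" by blast
  obtain LF where LF: "F \<longlonglongrightarrow> LF" using decseq_convergent[OF Fdecseq B] by blast
  have dF: "(\<lambda>k. F k - F (Suc k)) \<longlonglongrightarrow> 0"
    using tendsto_diff[OF LF LIMSEQ_Suc[OF LF]] by simp
  define e where "e k = t k * (norm (v k))^2" for k
  have e_nn: "e k \<ge> 0" for k using keyk[of k] unfolding e_def by simp
  have e_le: "e k \<le> (F k - F (Suc k)) / (\<alpha> * c / 2)" for k
  proof -
    have "\<alpha> * t k * (c / 2 * (norm (v k))^2) \<le> \<alpha> * t k * q k"
      using q_ge[of k] keyk[of k] params by (intro mult_left_mono) auto
    hence "\<alpha> * c / 2 * e k \<le> F k - F (Suc k)" using keyk[of k] unfolding e_def by (simp add: algebra_simps)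
    then show ?thesis using params c_pos by (simp add: pos_le_divide_eq mult.commute)
  qed
  have e_lim: "e \<longlonglongrightarrow> 0"
  proof (rule tendsto_sandwich[of "\<lambda>_. 0" e sequentially "\<lambda>k. (F k - F (Suc k)) / (\<alpha> * c / 2)"])
    show "(\<lambda>k. (F k - F (Suc k)) / (\<alpha> * c / 2)) \<longlonglongrightarrow> 0"
      using tendsto_divide[OF dF tendsto_const[of "\<alpha> * c / 2"]] params c_pos by simp
  qed (use e_nn e_le in auto)
  obtain \<delta> where \<delta>: "\<delta> > 0" "(\<Union>y\<in>K. ball y \<delta>) \<subseteq> \<Omega>"
    using compact_subset_open_imp_ball_epsilon_subset[OF Kc \<Omega>(1) KO] by blast
  define \<theta> where "\<theta> = (1 - \<alpha>) * c / (2 * (L + 1))"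
  have L0: "L \<ge> 0" using f_lip by (simp add: lipschitz_on_def)
  have \<theta>_pos: "\<theta> > 0" unfolding \<theta>_def using params c_pos L0 by simp
  have alt: "t k = 1 \<or> \<beta> * \<theta> < t k \<or> \<beta> * \<delta> \<le> t k * norm (v k)" for k
  proof (rule ccontr)
    assume na: "\<not> (t k = 1 \<or> \<beta> * \<theta> < t k \<or> \<beta> * \<delta> \<le> t k * norm (v k))"
    obtain j where tj: "t k = \<beta> ^ j" and minj: "\<forall>i<j. \<not> okk k i" using step[of k] by blast
    have "j \<noteq> 0"
    proof
      assume "j = 0" then show False using na tj by simp
    qed
    then obtain i where ji: "j = Suc i" by (cases j) auto
    define s where "s = \<beta> ^ i"
    have ts: "t k = \<beta> * s" using tj ji s_def by simp
    have s_pos: "s > 0" using params s_def by simp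
    have "\<beta> * s \<le> \<beta> * \<theta>" using na ts by linarith
    hence s\<theta>: "s \<le> \<theta>" using params by (simp add: mult_le_cancel_left_pos)
    have "\<beta> * (s * norm (v k)) < \<beta> * \<delta>" using na ts by (simp add: mult.assoc)
    hence s\<delta>: "s * norm (v k) < \<delta>" using params by (simp add: mult_less_cancel_left_pos)
    have nok: "\<not> okk k i" using minj ji by simp
    have seg: "x k + r *\<^sub>R v k \<in> \<Omega>" if "0 \<le> r" "r \<le> s" for r
    proof -
      have "r * norm (v k) \<le> s * norm (v k)" using that by (intro mult_right_mono) auto
      hence "dist (x k) (x k + r *\<^sub>R v k) < \<delta>" using that s\<delta> by (simp add: dist_norm)
      hence "x k + r *\<^sub>R v k \<in> ball (x k) \<delta>" by (simp add: mem_ball)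
      moreover have "ball (x k) \<delta> \<subseteq> \<Omega>" using \<delta>(2) xK[of k] by (meson UN_subset_iff)
      ultimately show ?thesis by blast
    qed
    have desc: "f (x k + s *\<^sub>R v k) \<le> f (x k) + s * (fgrad (x k) \<bullet> v k) + L * s^2 * (norm (v k))^2"
      by (rule descent[OF f_grad f_lip _ seg]) (use s_pos in auto)
    have "L * s * (norm (v k))^2 \<le> (L + 1) * \<theta> * (norm (v k))^2"
      using s\<theta> L0 s_pos by (intro mult_right_mono mult_mono) auto
    also have "(L + 1) * \<theta> = (1 - \<alpha>) * (c / 2)" unfolding \<theta>_def using L0 by (simp add: field_simps)
    also have "(1 - \<alpha>) * (c / 2) * (norm (v k))^2 \<le> (1 - \<alpha>) * q k"
      using q_ge[of k] params by (simp add: mult.assoc)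
    finally have "s * (L * s * (norm (v k))^2) \<le> s * ((1 - \<alpha>) * q k)"
      using s_pos by (intro mult_left_mono) auto
    hence Ls: "L * s^2 * (norm (v k))^2 \<le> (1 - \<alpha>) * s * q k" by (simp add: power2_eq_square algebra_simps)
    have gx: "g (x k) = ereal (G (x k))" using gG keyk inv[of k] by auto
    have gxh: "g (xh k) = ereal (G (xh k))" using gG keyk[of k] by auto
    have dec: "fgrad (x k) \<bullet> v k + G (xh k) - G (x k) \<le> - q k" using keyk[of k] by blast
    have "f (x k + s *\<^sub>R v k) + s * G (xh k) + (1 - s) * G (x k)
        \<le> f (x k) + G (x k) + s * (fgrad (x k) \<bullet> v k + G (xh k) - G (x k)) + L * s^2 * (norm (v k))^2"
      using desc by (simp add: algebra_simps)
    also have "\<dots> \<le> f (x k) + G (x k) + s * (- q k) + (1 - \<alpha>) * s * q k"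
    proof -
      have "s * (fgrad (x k) \<bullet> v k + G (xh k) - G (x k)) \<le> s * (- q k)"
        using dec s_pos by (intro mult_left_mono) auto
      then show ?thesis using Ls by linarith
    qed
    finally have real_ok: "f (x k + s *\<^sub>R v k) + s * G (xh k) + (1 - s) * G (x k) \<le> F k - \<alpha> * s * q k"
      unfolding F_def by (simp add: algebra_simps)
    have "okk k i"
      unfolding okk_def s_def[symmetric] using real_ok ext_in[OF seg[of s]] gx gxh hhF[of k] s_pos
      by simp
    thus False using nok by simp
  qed
  define m where "m = min 1 (\<beta> * \<theta>)"
  have m_pos: "m > 0" unfolding m_def using params \<theta>_pos by simp
  have ev: "eventually (\<lambda>k. e k < (\<beta> * \<delta>)^2) sequentially"
    using order_tendstoD(2)[OF e_lim, of "(\<beta> * \<delta>)^2"] params \<delta> by simp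
  have "eventually (\<lambda>k. norm (v k) \<le> sqrt (e k / m)) sequentially"
  proof (rule eventually_mono[OF ev])
    fix k assume ek: "e k < (\<beta> * \<delta>)^2"
    have t01: "0 < t k" "t k \<le> 1" using keyk[of k] by auto
    have "m * (norm (v k))^2 \<le> e k"
    proof -
      consider "t k = 1" | "\<beta> * \<theta> < t k" | "\<beta> * \<delta> \<le> t k * norm (v k)" using alt[of k] by blast
      then show ?thesis
      proof cases
        case 1
        have "m \<le> 1" unfolding m_def by simp
        hence "m * (norm (v k))^2 \<le> 1 * (norm (v k))^2" by (intro mult_right_mono) auto
        then show ?thesis using 1 unfolding e_def by simp
      next
        case 2
        have "m \<le> t k" unfolding m_def using 2 by linarith
        then show ?thesis unfolding e_def by (intro mult_right_mono) auto
      next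
        case 3
        have "(\<beta> * \<delta>)^2 \<le> (t k * norm (v k))^2"
          using 3 params \<delta> by (intro power_mono) auto
        also have "\<dots> = t k * (t k * (norm (v k))^2)" by (simp add: power2_eq_square)
        also have "\<dots> \<le> 1 * (t k * (norm (v k))^2)"
          using t01 by (intro mult_right_mono) auto
        finally show ?thesis using ek unfolding e_def by simp
      qed
    qed
    hence "(norm (v k))^2 \<le> e k / m" using m_pos by (simp add: pos_le_divide_eq mult.commute)
    thus "norm (v k) \<le> sqrt (e k / m)" by (rule real_le_rsqrt)
  qed
  moreover have "(\<lambda>k. sqrt (e k / m)) \<longlonglongrightarrow> 0"
    using tendsto_real_sqrt[OF tendsto_divide[OF e_lim tendsto_const[of m]]] m_pos by simp
  ultimately have "v \<longlonglongrightarrow> 0" by (rule Lim_null_comparison)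
  then show ?thesis using part1 unfolding v_def by simp
qed

end
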